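(* If $G$ is a finite group, then the group $\mathrm{Gr}(\mathrm{Pq}(G))$ is finite.
   Context: For a group $G$, $\mathrm{Pq}(G)$ is the power quandle on the underlying set of $G$ with $a\rhd b=aba^{-1}$, $\pi^n(a)=a^n$ ($n\in\mathbb{Z}$), and unit the identity $e$. $\mathrm{Gr}(\mathrm{Pq}(G))$ is the group with generators $\sigma(a)$, $a\in G$, and relations $\sigma(aba^{-1})=\sigma(a)\sigma(b)\sigma(a)^{-1}$, $\sigma(a^n)=\sigma(a)^n$, $\sigma(e)=1$ for all $a,b\in G$, $n\in\mathbb{Z}$. *)

theory Defs
  imports "HOL-Algebra.Group"
begin

text \<open>A letter (a, True) stands for sigma(a), a letter
  (a, False) for sigma(a)^-1; words are lists of letters with a in carrier G.
  pq_rel G is the congruence on words generated by free cancellation and the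
  defining relations of Gr(Pq(G)).\<close>

definition sigma_pow :: "'a \<Rightarrow> int \<Rightarrow> ('a \<times> bool) list" where
  "sigma_pow a n = (if 0 \<le> n then replicate (nat n) (a, True) else replicate (nat (- n)) (a, False))"

definition pq_words :: "('a, 'b) monoid_scheme \<Rightarrow> ('a \<times> bool) list set" where
  "pq_words G = lists (carrier G \<times> UNIV)"

inductive_set pq_rel :: "('a, 'b) monoid_scheme \<Rightarrow> (('a \<times> bool) list \<times> ('a \<times> bool) list) set"
  for G where
  refl: "w \<in> pq_words G \<Longrightarrow> (w, w) \<in> pq_rel G"
| sym: "(u, v) \<in> pq_rel G \<Longrightarrow> (v, u) \<in> pq_rel G"
| trans: "(u, v) \<in> pq_rel G \<Longrightarrow> (v, w) \<in> pq_rel G \<Longrightarrow> (u, w) \<in> pq_rel G"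
| cong: "(u, v) \<in> pq_rel G \<Longrightarrow> x \<in> pq_words G \<Longrightarrow> y \<in> pq_words G
          \<Longrightarrow> (x @ u @ y, x @ v @ y) \<in> pq_rel G"
| cancel: "a \<in> carrier G \<Longrightarrow> ([(a, b), (a, \<not> b)], []) \<in> pq_rel G"
| conj: "a \<in> carrier G \<Longrightarrow> b \<in> carrier G \<Longrightarrow>
          ([(a \<otimes>\<^bsub>G\<^esub> b \<otimes>\<^bsub>G\<^esub> inv\<^bsub>G\<^esub> a, True)], [(a, True), (b, True), (a, False)]) \<in> pq_rel G"
| power: "a \<in> carrier G \<Longrightarrow> ([(a [^]\<^bsub>G\<^esub> (n::int), True)], sigma_pow a n) \<in> pq_rel G"
| unit: "([(\<one>\<^bsub>G\<^esub>, True)], []) \<in> pq_rel G"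

definition GrPq :: "('a, 'b) monoid_scheme \<Rightarrow> ('a \<times> bool) list set monoid" where
  "GrPq G = \<lparr> carrier = pq_words G // pq_rel G,
             mult = (\<lambda>X Y. \<Union>{pq_rel G `` {x @ y} | x y. x \<in> X \<and> y \<in> Y}),
             one = pq_rel G `` {[]} \<rparr>"

end

theory Submission
  imports Defs "HOL-Algebra.Multiplicative_Group"
begin

context group
begin

abbreviation "R \<equiv> pq_rel G"

lemma rel_left: "(u,v) \<in> R \<Longrightarrow> x \<in> pq_words G \<Longrightarrow> (x@u, x@v) \<in> R"
  using pq_rel.cong[of u v G x "[]"] by (simp add: pq_words_def)

lemma rel_right: "(u,v) \<in> R \<Longrightarrow> y \<in> pq_words G \<Longrightarrow> (u@y, v@y) \<in> R"
  using pq_rel.cong[of u v G "[]" y] by (simp add: pq_words_def)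

lemma neg_pos: "a \<in> carrier G \<Longrightarrow> ([(a,False)], [(inv a, True)]) \<in> R"
  using pq_rel.power[of a G "-1"]
  by (auto simp: sigma_pow_def int_pow_neg intro: pq_rel.sym)

lemma to_pos: "w \<in> pq_words G \<Longrightarrow> \<exists>v. set v \<subseteq> carrier G \<times> {True} \<and> (w,v) \<in> R"
proof (induction w)
  case Nil
  then show ?case using pq_rel.refl[of "[]" G] by (intro exI[of _ "[]"]) (auto simp: pq_words_def)
next
  case (Cons l w)
  obtain a b where l: "l = (a,b)" by force
  from Cons.prems l have a: "a \<in> carrier G" and w: "w \<in> pq_words G" by (auto simp: pq_words_def)
  from Cons.IH[OF w] obtain v where v: "set v \<subseteq> carrier G \<times> {True}" "(w,v) \<in> R" by blast
  have vw: "v \<in> pq_words G" using v(1) by (auto simp: pq_words_def)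
  have 1: "((a,b)#w, (a,b)#v) \<in> R" using rel_left[OF v(2), of "[(a,b)]"] a by (simp add: pq_words_def)
  show ?case
  proof (cases b)
    case True
    then show ?thesis using 1 v a l by (intro exI[of _ "(a,b)#v"]) auto
  next
    case False
    have "((a,b)#v, (inv a, True)#v) \<in> R" using rel_right[OF neg_pos[OF a] vw] False by simp
    then have "((a,b)#w, (inv a, True)#v) \<in> R" using 1 pq_rel.trans by blast
    then show ?thesis using v a l by (intro exI[of _ "(inv a, True)#v"]) auto
  qed
qed

lemma swap: assumes b: "b \<in> carrier G" and c: "c \<in> carrier G"
  shows "([(b,True),(c,True)], [(c,True),(inv c \<otimes> b \<otimes> c,True)]) \<in> R"
proof -
  define b' where "b' = inv c \<otimes> b \<otimes> c"
  have b': "b' \<in> carrier G" using b c by (simp add: b'_def)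
  have e0: "c \<otimes> (inv c \<otimes> b) = b" using b c by (simp add: m_assoc[symmetric])
  have e: "c \<otimes> b' \<otimes> inv c = b" using b c e0 by (simp add: b'_def m_assoc)
  have 1: "([(b,True)], [(c,True),(b',True),(c,False)]) \<in> R"
    using pq_rel.conj[OF c b'] e by simp
  have 2: "([(b,True),(c,True)], [(c,True),(b',True),(c,False),(c,True)]) \<in> R"
    using rel_right[OF 1, of "[(c,True)]"] c by (simp add: pq_words_def)
  have 3: "([(c,True),(b',True),(c,False),(c,True)], [(c,True),(b',True)]) \<in> R"
    using pq_rel.cong[OF pq_rel.cancel[OF c, of False], of "[(c,True),(b',True)]" "[]"] c b'
    by (simp add: pq_words_def)
  show ?thesis using pq_rel.trans[OF 2 3] by (simp add: b'_def)
qed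

lemma pass: "a \<in> carrier G \<Longrightarrow> c \<in> carrier G \<Longrightarrow>
  \<exists>a'\<in>carrier G. ((a,True)#replicate k (c,True), replicate k (c,True) @ [(a',True)]) \<in> R"
proof (induction k arbitrary: a)
  case 0
  then show ?case using pq_rel.refl[of "[(a,True)]" G] by (auto simp: pq_words_def)
next
  case (Suc k)
  define a1 where "a1 = inv c \<otimes> a \<otimes> c"
  have a1: "a1 \<in> carrier G" using Suc.prems by (simp add: a1_def)
  have 1: "((a,True)#(c,True)#replicate k (c,True), (c,True)#(a1,True)#replicate k (c,True)) \<in> R"
    using rel_right[OF swap[OF Suc.prems], of "replicate k (c,True)"] Suc.prems
    by (simp add: pq_words_def a1_def in_lists_conv_set)
  obtain a' where a': "a' \<in> carrier G"
    "((a1,True)#replicate k (c,True), replicate k (c,True) @ [(a',True)]) \<in> R"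
    using Suc.IH[OF a1 Suc.prems(2)] by blast
  have 2: "((c,True)#(a1,True)#replicate k (c,True), (c,True)#replicate k (c,True) @ [(a',True)]) \<in> R"
    using rel_left[OF a'(2), of "[(c,True)]"] Suc.prems by (simp add: pq_words_def)
  show ?case using pq_rel.trans[OF 1 2] a' by auto
qed

lemma collect: "set w \<subseteq> carrier G \<times> {True} \<Longrightarrow> c \<in> carrier G \<Longrightarrow>
  k \<le> length (filter (\<lambda>l. fst l = c) w) \<Longrightarrow>
  \<exists>r. set r \<subseteq> carrier G \<times> {True} \<and> length r + k = length w \<and> (w, replicate k (c,True) @ r) \<in> R"
proof (induction w arbitrary: k)
  case Nil
  then show ?case using pq_rel.refl[of "[]" G] by (auto simp: pq_words_def)
next
  case (Cons l w)
  obtain a where l: "l = (a,True)" and a: "a \<in> carrier G" using Cons.prems(1) by force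
  have w: "set w \<subseteq> carrier G \<times> {True}" using Cons.prems(1) by auto
  have ww: "w \<in> pq_words G" using w by (auto simp: pq_words_def)
  show ?case
  proof (cases "a = c")
    case True
    show ?thesis
    proof (cases k)
      case 0
      then show ?thesis using pq_rel.refl[of "l#w" G] Cons.prems(1)
        by (intro exI[of _ "l#w"]) (auto simp: pq_words_def)
    next
      case (Suc k')
      with Cons.prems True l have "k' \<le> length (filter (\<lambda>l. fst l = c) w)" by simp
      from Cons.IH[OF w Cons.prems(2) this] obtain r where
        r: "set r \<subseteq> carrier G \<times> {True}" "length r + k' = length w" "(w, replicate k' (c,True) @ r) \<in> R"
        by blast
      have "(l#w, l#replicate k' (c,True) @ r) \<in> R"
        using rel_left[OF r(3), of "[l]"] l a by (simp add: pq_words_def)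
      then show ?thesis using r Suc True l by (intro exI[of _ r]) auto
    qed
  next
    case False
    with Cons.prems l have "k \<le> length (filter (\<lambda>l. fst l = c) w)" by simp
    from Cons.IH[OF w Cons.prems(2) this] obtain r where
      r: "set r \<subseteq> carrier G \<times> {True}" "length r + k = length w" "(w, replicate k (c,True) @ r) \<in> R"
      by blast
    have rw: "r \<in> pq_words G" using r(1) by (auto simp: pq_words_def)
    have 1: "(l#w, l#replicate k (c,True) @ r) \<in> R"
      using rel_left[OF r(3), of "[l]"] l a by (simp add: pq_words_def)
    obtain a' where a': "a' \<in> carrier G"
      "((a,True)#replicate k (c,True), replicate k (c,True) @ [(a',True)]) \<in> R"
      using pass[OF a Cons.prems(2)] by blast
    have 2: "(l#replicate k (c,True) @ r, replicate k (c,True) @ ((a',True) # r)) \<in> R"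
      using rel_right[OF a'(2) rw] l by simp
    show ?thesis using pq_rel.trans[OF 1 2] r a' by (intro exI[of _ "(a',True)#r"]) auto
  qed
qed

lemma kill: "c \<in> carrier G \<Longrightarrow> (replicate (order G) (c,True), []) \<in> R"
proof -
  assume c: "c \<in> carrier G"
  have "([(c [^] int (order G), True)], sigma_pow c (int (order G))) \<in> R"
    using pq_rel.power[OF c] .
  then have "([(\<one>, True)], replicate (order G) (c,True)) \<in> R"
    using pow_order_eq_1[OF c] by (simp add: sigma_pow_def int_pow_int)
  then show ?thesis using pq_rel.unit pq_rel.sym pq_rel.trans by blast
qed

lemma count_sum: "set (map fst w) \<subseteq> S \<Longrightarrow> finite S \<Longrightarrow>
  (\<Sum>c\<in>S. length (filter (\<lambda>l. fst l = c) w)) = length w"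
proof (induction w)
  case Nil
  then show ?case by simp
next
  case (Cons l w)
  have "(\<Sum>c\<in>S. length (filter (\<lambda>l. fst l = c) (l#w)))
      = (\<Sum>c\<in>S. (if fst l = c then 1 else 0) + length (filter (\<lambda>l. fst l = c) w))"
    by (intro sum.cong) auto
  also have "\<dots> = (\<Sum>c\<in>S. (if fst l = c then 1 else 0)) + length w"
    using Cons by (simp add: sum.distrib)
  also have "(\<Sum>c\<in>S. (if fst l = c then 1 else 0)) = (1::nat)"
    using Cons.prems by (simp add: sum.delta)
  finally show ?case by simp
qed

lemma reduce:
  assumes fin: "finite (carrier G)"
  shows "set w \<subseteq> carrier G \<times> {True} \<Longrightarrow>
    \<exists>v. set v \<subseteq> carrier G \<times> {True} \<and> length v < order G * order G \<and> (w,v) \<in> R"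
proof (induction "length w" arbitrary: w rule: less_induct)
  case less
  define m where "m = order G"
  have m1: "m \<ge> 1" using fin unfolding m_def order_def
    by (metis card_0_eq empty_iff less_one not_less one_closed)
  show ?case
  proof (cases "length w < m * m")
    case True
    then show ?thesis using less.prems pq_rel.refl[of w G]
      by (intro exI[of _ w]) (auto simp: pq_words_def m_def)
  next
    case False
    have "\<exists>c\<in>carrier G. m \<le> length (filter (\<lambda>l. fst l = c) w)"
    proof (rule ccontr)
      assume "\<not> ?thesis"
      then have lt: "\<And>c. c \<in> carrier G \<Longrightarrow> length (filter (\<lambda>l. fst l = c) w) < m" by auto
      have ne: "carrier G \<noteq> {}" by auto
      have "length w = (\<Sum>c\<in>carrier G. length (filter (\<lambda>l. fst l = c) w))"
      proof -
        have "set (map fst w) \<subseteq> carrier G" using less.prems by auto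
        then show ?thesis using count_sum[of w "carrier G"] fin by simp
      qed
      also have "\<dots> < (\<Sum>c\<in>carrier G. m)"
        using sum_strict_mono[OF fin ne lt] by simp
      also have "\<dots> = m * m" by (simp add: m_def order_def)
      finally show False using False by simp
    qed
    then obtain c where c: "c \<in> carrier G" "m \<le> length (filter (\<lambda>l. fst l = c) w)" by blast
    from collect[OF less.prems c(1) c(2)] obtain r where
      r: "set r \<subseteq> carrier G \<times> {True}" "length r + m = length w" "(w, replicate m (c,True) @ r) \<in> R"
      by blast
    have rw: "r \<in> pq_words G" using r(1) by (auto simp: pq_words_def)
    have "(replicate m (c,True) @ r, r) \<in> R"
      using rel_right[OF kill[OF c(1)] rw] by (simp add: m_def)
    then have wr: "(w, r) \<in> R" using r(3) pq_rel.trans by blast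
    have "length r < length w" using r(2) m1 by simp
    from less.hyps[OF this r(1)] obtain v where
      "set v \<subseteq> carrier G \<times> {True}" "length v < order G * order G" "(r,v) \<in> R" by blast
    then show ?thesis using wr pq_rel.trans by blast
  qed
qed

lemma class_eq: "(w,v) \<in> R \<Longrightarrow> R `` {w} = R `` {v}"
  using pq_rel.sym pq_rel.trans by blast

end

theorem mainTheorem12:
  fixes G :: "('a, 'b) monoid_scheme"
  assumes "group G" and "finite (carrier G)"
  shows "finite (carrier (GrPq G))"
proof -
  interpret group G by fact
  define V where "V = {v :: ('a \<times> bool) list. set v \<subseteq> carrier G \<times> UNIV \<and> length v \<le> order G * order G}"
  have fV: "finite V" unfolding V_def
    by (intro finite_lists_length_le finite_cartesian_product assms(2)) simp
  have "carrier (GrPq G) \<subseteq> (\<lambda>v. pq_rel G `` {v}) ` V"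
  proof
    fix X assume "X \<in> carrier (GrPq G)"
    then obtain w where w: "w \<in> pq_words G" and X: "X = pq_rel G `` {w}"
      by (auto simp: GrPq_def quotient_def)
    obtain u where u: "set u \<subseteq> carrier G \<times> {True}" "(w,u) \<in> pq_rel G" using to_pos[OF w] by blast
    obtain v where v: "set v \<subseteq> carrier G \<times> {True}" "length v < order G * order G" "(u,v) \<in> pq_rel G"
      using reduce[OF assms(2) u(1)] by blast
    have "(w,v) \<in> pq_rel G" using u(2) v(3) pq_rel.trans by blast
    then have "X = pq_rel G `` {v}" using X class_eq by blast
    moreover have "v \<in> V" using v unfolding V_def by auto
    ultimately show "X \<in> (\<lambda>v. pq_rel G `` {v}) ` V" by blast
  qed
  then show ?thesis using fV finite_subset by blast
qed

end
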